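(* Consider the following setting. Let $\mathcal{Z}=\mathcal{Z}_1\times\cdots\times\mathcal{Z}_N\subset\mathbb{R}^n$ be a product of nonempty convex compact sets, and for each $i$ let $C_i:\mathcal{Z}_i\to\mathbb{R}$ be twice differentiable with $\nabla^2 C_i(z_i)\succeq\sigma_c I$ for some $\sigma_c>0$ and with Lipschitz continuous gradient on $\mathcal{Z}_i$. Let $g(z)=Rz+g_0$ be an affine map $\mathbb{R}^n\to\mathbb{R}^m$ ($m\ge 1$) with $\|R\|_F\le\sigma_g$ for some $\sigma_g>0$. Fix $\phi>0$ and define the regularized Lagrangian $$\mathcal{L}(z,\mu)=\sum_{i=1}^N C_i(z_i)+\mu^\top g(z)-\frac{\phi}{2}\|\mu\|^2,$$ the dual function $h(\mu)=\min_{z\in\mathcal{Z}}\mathcal{L}(z,\mu)$ for $\mu\in\mathbb{R}^m_{\ge 0}$. Suppose $\sigma_h>0$ is a constant such that for all $\mu,\tilde\mu\in\mathbb{R}^m_{\ge0}$, $$\big(\nabla h(\mu)-\nabla h(\tilde\mu)\big)^\top(\mu-\tilde\mu)\le-\sigma_h\|\mu-\tilde\mu\|^2 .$$ Then $\sigma_h\le \sigma_g^2/\sigma_c+\phi$.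
   Context: $\|\cdot\|$ is the Euclidean norm and $\|\cdot\|_F$ the Frobenius norm. Under the stated hypotheses, $h$ is differentiable on $\mathbb{R}^m_{\ge0}$ with $\nabla h(\mu)=g(z^*(\mu))-\phi\mu$, where $z^*(\mu)$ is the unique minimizer of $\mathcal{L}(\cdot,\mu)$ over $\mathcal{Z}$, and $\nabla h$ is Lipschitz continuous with constant $\sigma_g^2/\sigma_c+\phi$. *)

theory Defs
  imports "HOL-Analysis.Analysis"
begin

text \<open>Block structure: the coordinates of R^n (index type 'n) are partitioned into
  blocks by the map b :: 'n => 'k (block index type 'k, N = CARD('k)).
  The i-th block component z_i of z is represented as the zero-padded vector
  blockproj b k z, i.e. an element of the block subspace.\<close>

definition blockproj :: "('n::finite \<Rightarrow> 'k) \<Rightarrow> 'k \<Rightarrow> real^'n \<Rightarrow> real^'n" where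
  "blockproj b k z = (\<chi> j. if b j = k then z $ j else 0)"

definition blocksub :: "('n::finite \<Rightarrow> 'k) \<Rightarrow> 'k \<Rightarrow> (real^'n) set" where
  "blocksub b k = {x. \<forall>j. b j \<noteq> k \<longrightarrow> x $ j = 0}"

definition prodset :: "('n::finite \<Rightarrow> 'k) \<Rightarrow> ('k \<Rightarrow> (real^'n) set) \<Rightarrow> (real^'n) set" where
  "prodset b Zs = {z. \<forall>k. blockproj b k z \<in> Zs k}"

definition frobenius_norm :: "real^'n::finite^'m::finite \<Rightarrow> real" where
  "frobenius_norm A = sqrt (\<Sum>i\<in>UNIV. \<Sum>j\<in>UNIV. (A $ i $ j)^2)"

definition nonneg_orthant :: "(real^'m::finite) set" where
  "nonneg_orthant = {\<mu>. \<forall>i. 0 \<le> \<mu> $ i}"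

definition reg_lagrangian ::
  "('n::finite \<Rightarrow> 'k::finite) \<Rightarrow> ('k \<Rightarrow> real^'n \<Rightarrow> real) \<Rightarrow> real^'n^'m::finite \<Rightarrow> real^'m
     \<Rightarrow> real \<Rightarrow> real^'n \<Rightarrow> real^'m \<Rightarrow> real" where
  "reg_lagrangian b C R g0 \<phi> z \<mu> =
     (\<Sum>k\<in>UNIV. C k (blockproj b k z)) + \<mu> \<bullet> (R *v z + g0) - \<phi> / 2 * (norm \<mu>)^2"

definition dual_fun ::
  "('n::finite \<Rightarrow> 'k::finite) \<Rightarrow> ('k \<Rightarrow> (real^'n) set) \<Rightarrow> ('k \<Rightarrow> real^'n \<Rightarrow> real)
     \<Rightarrow> real^'n^'m::finite \<Rightarrow> real^'m \<Rightarrow> real \<Rightarrow> real^'m \<Rightarrow> real" where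
  "dual_fun b Zs C R g0 \<phi> \<mu> = Inf ((\<lambda>z. reg_lagrangian b C R g0 \<phi> z \<mu>) ` prodset b Zs)"

end

theory Submission
  imports Defs
begin


lemma quad_contra:
  fixes \<alpha> \<beta> \<gamma> :: real
  assumes a: "\<alpha> > 0" and H: "\<And>T. T \<ge> 1 \<Longrightarrow> \<alpha>*T*T \<le> \<beta>*T + \<gamma>"
  shows False
proof -
  define T where "T = 1 + (\<bar>\<beta>\<bar>+\<bar>\<gamma>\<bar>)/\<alpha>"
  have T1: "T \<ge> 1" using a by (simp add: T_def)
  have "\<alpha>*T = \<alpha> + (\<bar>\<beta>\<bar>+\<bar>\<gamma>\<bar>)" using a by (simp add: T_def field_simps)
  hence aT: "\<alpha>*T > \<bar>\<beta>\<bar>+\<bar>\<gamma>\<bar>" using a by linarith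
  have "\<alpha>*T*T > (\<bar>\<beta>\<bar>+\<bar>\<gamma>\<bar>)*T" using aT T1 by (intro mult_strict_right_mono) auto
  moreover have "(\<bar>\<beta>\<bar>+\<bar>\<gamma>\<bar>)*T \<ge> \<beta>*T + \<gamma>"
  proof -
    have "\<beta>*T \<le> \<bar>\<beta>\<bar>*T" using T1 by (intro mult_right_mono) auto
    moreover have "\<gamma> \<le> \<bar>\<gamma>\<bar>*T" using T1 by (smt (verit) mult_le_cancel_left1)
    ultimately show ?thesis by (simp add: distrib_right)
  qed
  ultimately show False using H[OF T1] by linarith
qed

lemma blockproj_comp: "blockproj b k z $ j = (if b j = k then z $ j else 0)"
  by (simp add: blockproj_def)

lemma sum_blockproj:
  fixes b :: "'n::finite \<Rightarrow> 'k::finite"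
  shows "(\<Sum>k\<in>UNIV. blockproj b k z) = (z::real^'n)"
proof -
  have "(\<Sum>k\<in>UNIV. blockproj b k z) $ j = z $ j" for j
  proof -
    have "(\<Sum>k\<in>UNIV. blockproj b k z) $ j = (\<Sum>k\<in>UNIV. if k = b j then z $ j else 0)"
      by (auto simp: blockproj_comp intro: sum.cong)
    also have "\<dots> = z $ j" by (subst sum.delta) auto
    finally show ?thesis .
  qed
  thus ?thesis by (simp add: vec_eq_iff)
qed

theorem lemma2:
  fixes b :: "'n::finite \<Rightarrow> 'k::finite"
    and Zs :: "'k \<Rightarrow> (real^'n) set"
    and C :: "'k \<Rightarrow> real^'n \<Rightarrow> real"
    and DC :: "'k \<Rightarrow> real^'n \<Rightarrow> real^'n"
    and HC :: "'k \<Rightarrow> real^'n \<Rightarrow> real^'n \<Rightarrow> real^'n"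
    and R :: "real^'n^'m::finite" and g0 :: "real^'m"
    and \<sigma>c \<sigma>g \<phi> \<sigma>h :: real
    and Dh :: "real^'m \<Rightarrow> real^'m"
  assumes Z_ne: "\<And>k. Zs k \<noteq> {}"
    and Z_convex: "\<And>k. convex (Zs k)"
    and Z_compact: "\<And>k. compact (Zs k)"
    and Z_block: "\<And>k. Zs k \<subseteq> blocksub b k"
    and C_open: "\<And>k. \<exists>U. open U \<and> Zs k \<subseteq> U \<and>
                   (\<forall>x\<in>U. (C k has_derivative (\<lambda>v. DC k x \<bullet> v)) (at x))"
    and C_twice: "\<And>k x. x \<in> Zs k \<Longrightarrow> (DC k has_derivative HC k x) (at x)"
    and C_hess: "\<And>k x v. x \<in> Zs k \<Longrightarrow> v \<in> blocksub b k \<Longrightarrow>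
                   \<sigma>c * (norm v)^2 \<le> v \<bullet> HC k x v"
    and C_lip: "\<And>k. \<exists>L. \<forall>x\<in>Zs k. \<forall>y\<in>Zs k.
                   norm (blockproj b k (DC k x) - blockproj b k (DC k y)) \<le> L * norm (x - y)"
    and \<sigma>c_pos: "\<sigma>c > 0"
    and \<sigma>g_pos: "\<sigma>g > 0"
    and R_bound: "frobenius_norm R \<le> \<sigma>g"
    and \<phi>_pos: "\<phi> > 0"
    and h_grad: "\<And>\<mu>. \<mu> \<in> nonneg_orthant \<Longrightarrow>
                   (dual_fun b Zs C R g0 \<phi> has_derivative (\<lambda>v. Dh \<mu> \<bullet> v)) (at \<mu> within nonneg_orthant)"
    and \<sigma>h_pos: "\<sigma>h > 0"
    and strong: "\<And>\<mu> \<mu>'. \<mu> \<in> nonneg_orthant \<Longrightarrow> \<mu>' \<in> nonneg_orthant \<Longrightarrow>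
                   (Dh \<mu> - Dh \<mu>') \<bullet> (\<mu> - \<mu>') \<le> - \<sigma>h * (norm (\<mu> - \<mu>'))^2"
  shows "\<sigma>h \<le> \<sigma>g^2 / \<sigma>c + \<phi>"
proof -
  have cont: "continuous_on (Zs k) (C k)" for k
  proof -
    obtain U where U: "open U" "Zs k \<subseteq> U" "\<forall>x\<in>U. (C k has_derivative (\<lambda>v. DC k x \<bullet> v)) (at x)"
      using C_open[of k] by blast
    show ?thesis
      by (rule continuous_at_imp_continuous_on) (use U in \<open>blast intro: has_derivative_continuous\<close>)
  qed
  have "\<forall>k. \<exists>x\<in>Zs k. \<forall>y\<in>Zs k. C k x \<le> C k y"
    using continuous_attains_inf[OF Z_compact Z_ne cont] by blast
  then obtain xm where xm: "\<And>k. xm k \<in> Zs k" "\<And>k y. y \<in> Zs k \<Longrightarrow> C k (xm k) \<le> C k y"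
    by metis
  have "\<forall>k. \<exists>B. \<forall>x\<in>Zs k. norm x \<le> B"
    using Z_compact compact_imp_bounded bounded_iff by blast
  then obtain Bk where Bk: "\<And>k x. x \<in> Zs k \<Longrightarrow> norm x \<le> Bk k" by metis
  obtain K where K: "\<And>z. norm (R *v z) \<le> norm z * K"
    using bounded_linear.bounded[OF matrix_vector_mul_bounded_linear[of R]] by blast
  define m1 where "m1 = (\<Sum>k\<in>UNIV. C k (xm k))"
  define Bs where "Bs = (\<Sum>k\<in>UNIV. Bk k)"
  define d :: "real^'m" where "d = (\<chi> i. 1)"
  define W where "W = \<bar>K\<bar> * Bs + norm g0"
  define h where "h = dual_fun b Zs C R g0 \<phi>"
  define nd where "nd = (norm d)^2"
  have d0: "d \<noteq> 0" by (simp add: d_def vec_eq_iff)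
  hence nd_pos: "nd > 0" by (simp add: nd_def)
  have C_low: "(\<Sum>k\<in>UNIV. C k (blockproj b k z)) \<ge> m1" if "z \<in> prodset b Zs" for z
    unfolding m1_def using that by (intro sum_mono xm(2)) (auto simp: prodset_def)
  have z_bound: "norm z \<le> Bs" if "z \<in> prodset b Zs" for z
  proof -
    have "norm z = norm (\<Sum>k\<in>UNIV. blockproj b k z)" by (simp add: sum_blockproj)
    also have "\<dots> \<le> (\<Sum>k\<in>UNIV. norm (blockproj b k z))" by (rule norm_sum)
    also have "\<dots> \<le> Bs" unfolding Bs_def using that
      by (intro sum_mono Bk) (auto simp: prodset_def)
    finally show ?thesis .
  qed
  have g_bound: "norm (R *v z + g0) \<le> W" if "z \<in> prodset b Zs" for z
  proof -
    have "norm (R *v z + g0) \<le> norm (R *v z) + norm g0" by (rule norm_triangle_ineq)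
    also have "norm (R *v z) \<le> norm z * \<bar>K\<bar>" using K[of z] by (smt (verit) mult_left_mono norm_ge_zero abs_ge_self)
    also have "norm z * \<bar>K\<bar> \<le> Bs * \<bar>K\<bar>" using z_bound[OF that] by (intro mult_right_mono) auto
    finally show ?thesis by (simp add: W_def mult.commute)
  qed
  define z0 where "z0 = (\<Sum>k\<in>UNIV. xm k)"
  have xm0: "xm k $ j = 0" if "b j \<noteq> k" for k j
    using xm(1)[of k] Z_block[of k] that by (auto simp: blocksub_def)
  have "blockproj b k z0 = xm k" for k
  proof -
    have s: "(\<Sum>k'\<in>UNIV. xm k' $ j) = xm (b j) $ j" for j
    proof -
      have "(\<Sum>k'\<in>UNIV. xm k' $ j) = (\<Sum>k'\<in>UNIV. if k' = b j then xm k' $ j else 0)"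
        by (rule sum.cong) (auto simp: xm0)
      thus ?thesis by simp
    qed
    show ?thesis by (auto simp: vec_eq_iff blockproj_comp z0_def s xm0)
  qed
  hence z0: "z0 \<in> prodset b Zs" using xm(1) by (simp add: prodset_def)
  have h_low: "h (T *\<^sub>R d) \<ge> m1 - T * (norm d * W) - \<phi>/2 * T^2 * nd" if T: "T \<ge> 0" for T
    unfolding h_def dual_fun_def
  proof (rule cInf_greatest)
    show "(\<lambda>z. reg_lagrangian b C R g0 \<phi> z (T *\<^sub>R d)) ` prodset b Zs \<noteq> {}" using z0 by blast
  next
    fix x assume "x \<in> (\<lambda>z. reg_lagrangian b C R g0 \<phi> z (T *\<^sub>R d)) ` prodset b Zs"
    then obtain z where z: "z \<in> prodset b Zs" and x: "x = reg_lagrangian b C R g0 \<phi> z (T *\<^sub>R d)" by blast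
    have "\<bar>d \<bullet> (R *v z + g0)\<bar> \<le> norm d * norm (R *v z + g0)" by (rule Cauchy_Schwarz_ineq2)
    also have "\<dots> \<le> norm d * W" using g_bound[OF z] by (intro mult_left_mono) auto
    finally have "T * (d \<bullet> (R *v z + g0)) \<ge> - (T * (norm d * W))"
      using T by (smt (verit) mult_left_mono abs_ge_minus_self mult_minus_right)
    moreover have "(norm (T *\<^sub>R d))^2 = T^2 * nd" using T by (simp add: nd_def power_mult_distrib)
    ultimately show "m1 - T * (norm d * W) - \<phi>/2 * T^2 * nd \<le> x"
      using C_low[OF z] by (simp add: x reg_lagrangian_def)
  qed
  define a where "a = Dh d \<bullet> d"
  define \<psi> where "\<psi> t = h (t *\<^sub>R d) - a * t + \<sigma>h * nd * (t-1)^2 / 2" for t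
  have dpos: "t *\<^sub>R d \<in> nonneg_orthant" if "t \<ge> 0" for t
    using that by (simp add: nonneg_orthant_def d_def)
  have deriv: "DERIV \<psi> t :> Dh (t *\<^sub>R d) \<bullet> d - a + \<sigma>h * nd * (t-1)" if t: "t > 0" for t
  proof -
    define P where "P = {\<mu>::real^'m. \<forall>i. 0 < \<mu> $ i}"
    have Peq: "P = (\<Inter>i. {\<mu>. \<mu> $ i > 0})" by (auto simp: P_def)
    have oP: "open P" unfolding Peq by (intro open_INT) (auto simp: open_halfspace_component_gt_cart)
    have PO: "P \<subseteq> nonneg_orthant" by (auto simp: P_def nonneg_orthant_def less_imp_le)
    have tP: "t *\<^sub>R d \<in> P" using t by (simp add: P_def d_def)
    have "(h has_derivative (\<lambda>v. Dh (t *\<^sub>R d) \<bullet> v)) (at (t *\<^sub>R d) within P)"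
      unfolding h_def by (rule has_derivative_subset[OF h_grad[OF dpos] PO]) (use t in simp)
    hence hd: "(h has_derivative (\<lambda>v. Dh (t *\<^sub>R d) \<bullet> v)) (at (t *\<^sub>R d))"
      using at_within_open[OF tP oP] by simp
    have "((\<lambda>s. s *\<^sub>R d) has_derivative (\<lambda>s. s *\<^sub>R d)) (at t)"
      by (intro derivative_eq_intros) auto
    from has_derivative_compose[OF this hd]
    have "((\<lambda>s. h (s *\<^sub>R d)) has_derivative (\<lambda>s. s * (Dh (t *\<^sub>R d) \<bullet> d))) (at t)"
      by (simp add: mult.commute)
    moreover have "(\<lambda>s. s * (Dh (t *\<^sub>R d) \<bullet> d)) = (*) (Dh (t *\<^sub>R d) \<bullet> d)"
      by (auto simp: fun_eq_iff)
    ultimately have "DERIV (\<lambda>s. h (s *\<^sub>R d)) t :> Dh (t *\<^sub>R d) \<bullet> d"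
      by (simp add: has_field_derivative_def)
    thus ?thesis unfolding \<psi>_def
      by (auto intro!: derivative_eq_intros simp: field_simps)
  qed
  have dneg: "Dh (t *\<^sub>R d) \<bullet> d - a + \<sigma>h * nd * (t-1) \<le> 0" if t: "t \<ge> 1" for t
  proof (cases "t = 1")
    case True thus ?thesis by (simp add: a_def)
  next
    case False
    hence t1: "t - 1 > 0" using t by simp
    have S: "(Dh (t *\<^sub>R d) - Dh d) \<bullet> (t *\<^sub>R d - d) \<le> - \<sigma>h * (norm (t *\<^sub>R d - d))^2"
      using strong[OF dpos dpos[of 1]] t by simp
    have e1: "t *\<^sub>R d - d = (t-1) *\<^sub>R d" by (simp add: algebra_simps)
    have N1: "norm (t *\<^sub>R d - d) = \<bar>t-1\<bar> * norm d" unfolding e1 by (simp only: norm_scaleR)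
    have N: "(norm (t *\<^sub>R d - d))^2 = (t-1)^2 * nd" unfolding N1 nd_def by (simp only: power_mult_distrib power2_abs)
    have L: "(Dh (t *\<^sub>R d) - Dh d) \<bullet> (t *\<^sub>R d - d) = (t-1) * (Dh (t *\<^sub>R d) \<bullet> d - a)"
      unfolding e1 a_def by (simp only: inner_scaleR_right inner_diff_left)
    have "(t-1) * (Dh (t *\<^sub>R d) \<bullet> d - a) \<le> - \<sigma>h * ((t-1)^2 * nd)"
      using S unfolding N L by linarith
    hence "(t-1) * (Dh (t *\<^sub>R d) \<bullet> d - a + \<sigma>h * nd * (t-1)) \<le> 0"
      by (simp add: power2_eq_square algebra_simps)
    thus ?thesis using t1 by (simp add: mult_le_0_iff)
  qed
  have up: "\<psi> T \<le> \<psi> 1" if "T \<ge> 1" for T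
  proof (rule DERIV_nonpos_imp_nonincreasing[OF that])
    fix x :: real assume x: "1 \<le> x" "x \<le> T"
    have "x > 0" using x by linarith
    show "\<exists>y. DERIV \<psi> x :> y \<and> y \<le> 0"
      using deriv[OF \<open>x > 0\<close>] dneg[OF x(1)] by blast
  qed
  have phi_ge: "\<sigma>h \<le> \<phi>"
  proof (rule ccontr)
    assume "\<not> \<sigma>h \<le> \<phi>"
    hence al: "(\<sigma>h - \<phi>) * nd / 2 > 0" using nd_pos by simp
    show False
    proof (rule quad_contra[OF al, of "\<sigma>h * nd + a + norm d * W" "h d - a - m1 - \<sigma>h * nd / 2"])
      fix T :: real assume T: "T \<ge> 1"
      have A: "\<psi> T \<le> \<psi> 1" by (rule up[OF T])
      have B: "h (T *\<^sub>R d) \<ge> m1 - T * (norm d * W) - \<phi>/2 * T^2 * nd" using T by (intro h_low) simp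
      show "(\<sigma>h - \<phi>) * nd / 2 * T * T \<le> (\<sigma>h * nd + a + norm d * W) * T + (h d - a - m1 - \<sigma>h * nd / 2)"
      proof -
        have A': "h (T *\<^sub>R d) - a * T + \<sigma>h * nd * (T-1)^2 / 2 \<le> h (1 *\<^sub>R d) - a * 1 + \<sigma>h * nd * (1-1)^2 / 2"
          using A unfolding \<psi>_def .
        have E1: "(\<sigma>h - \<phi>) * nd / 2 * T * T = \<sigma>h * nd * (T-1)^2 / 2 - \<phi>/2 * T^2 * nd + \<sigma>h*nd*T - \<sigma>h*nd/2"
          by (simp add: power2_eq_square field_simps)
        have E2: "(\<sigma>h * nd + a + norm d * W) * T + (h d - a - m1 - \<sigma>h * nd / 2) = \<sigma>h*nd*T + a*T - a + T * (norm d * W) + h d - m1 - \<sigma>h*nd/2"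
          by (simp add: algebra_simps)
        show ?thesis using A' B E1 E2 by simp
      qed
    qed
  qed
  have "0 \<le> \<sigma>g^2 / \<sigma>c" using \<sigma>c_pos by simp
  thus ?thesis using phi_ge by linarith
qed

end
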